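(* Let $\mathcal{T}$ be a trie and let $p$ and $q$ be palindromes occurring in $\mathcal{T}$ (i.e. $p,q\in\mathsf{Substr}(\mathcal{T})$) such that $p$ is a proper prefix of $q$. If the locus of $p$ in $\mathsf{STree}(\mathcal{T})$ is an implicit node on an edge $(u,v)$ (with $v$ the child endpoint) and the character following it on that edge is $c$, then the locus of $q$ is an implicit node on some edge in the subtree of $\mathsf{STree}(\mathcal{T})$ rooted at $v$, and the character following it on its edge is also $c$.
   Context: A trie $\mathcal{T}$ is a rooted tree in which each edge is labeled by a single character and the out-going edges of each node have mutually distinct labels. Path labels are read leaf-to-root: for $\mathbf{u}$ a descendant of $\mathbf{v}$, $\mathsf{str}(\mathbf{u},\mathbf{v})$ is the string of edge labels on the path from $\mathbf{u}$ up to $\mathbf{v}$, and $\mathsf{Substr}(\mathcal{T})$ is the set of all such strings. By convention the root $\mathbf{r}$ of $\mathcal{T}$ has a single child, reached by an edge labeled by a special character $\$$ occurring nowhere else in $\mathcal{T}$. For each node $\mathbf{v}$ let $\mathsf{suf}(\mathbf{v})=\mathsf{str}(\mathbf{v},\mathbf{r})$. The suffix tree $\mathsf{STree}(\mathcal{T})$ is the compacted trie (edges labeled by non-empty strings, out-going edge labels of each node beginning with distinct characters, every internal node other than the root having at least two children) whose leaves are in one-to-one correspondence with the non-root nodes $\mathbf{v}$ of $\mathcal{T}$, the leaf for $\mathbf{v}$ spelling $\mathsf{suf}(\mathbf{v})$ from the root. The locus of a string $w\in\mathsf{Substr}(\mathcal{T})$ is the end point of the path spelling $w$ from the root of $\mathsf{STree}(\mathcal{T})$;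 it is an explicit node if it is a node of $\mathsf{STree}(\mathcal{T})$ and an implicit node if it lies strictly inside an edge. A palindrome is a string equal to its reversal. *)

theory Defs
  imports Main "HOL-Library.Sublist"
begin

text \<open>A trie is given by a node set N (nodes of type 'v), its root r, a parent
  function par (meaningful on non-root nodes), and lab v = the character labelling
  the edge from v to its parent.  The distinguished character d plays the role of the
  end marker.\<close>

definition trie :: "'v set \<Rightarrow> 'v \<Rightarrow> ('v \<Rightarrow> 'v) \<Rightarrow> ('v \<Rightarrow> 'a) \<Rightarrow> 'a \<Rightarrow> bool" where
  "trie N r par lab d \<longleftrightarrow>
     finite N \<and> r \<in> N \<and>
     (\<forall>v\<in>N - {r}. par v \<in> N) \<and>
     (\<forall>v\<in>N. \<exists>k. (par ^^ k) v = r) \<and>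
     (\<forall>v\<in>N - {r}. \<forall>w\<in>N - {r}. v \<noteq> w \<and> par v = par w \<longrightarrow> lab v \<noteq> lab w) \<and>
     card {v \<in> N - {r}. par v = r} = 1 \<and>
     (\<forall>v\<in>N - {r}. par v = r \<longrightarrow> lab v = d) \<and>
     (\<forall>v\<in>N - {r}. par v \<noteq> r \<longrightarrow> lab v \<noteq> d)"

definition depth :: "'v \<Rightarrow> ('v \<Rightarrow> 'v) \<Rightarrow> 'v \<Rightarrow> nat" where
  "depth r par v = (LEAST k. (par ^^ k) v = r)"

text \<open>suf v = str(v, r): edge labels read from v up to the root.\<close>
definition suf :: "'v \<Rightarrow> ('v \<Rightarrow> 'v) \<Rightarrow> ('v \<Rightarrow> 'a) \<Rightarrow> 'v \<Rightarrow> 'a list" where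
  "suf r par lab v = map (\<lambda>i. lab ((par ^^ i) v)) [0..<depth r par v]"

text \<open>str(u, par^k u) = take k (suf u); Substr(T) is the set of all such strings.\<close>
definition Substr :: "'v set \<Rightarrow> 'v \<Rightarrow> ('v \<Rightarrow> 'v) \<Rightarrow> ('v \<Rightarrow> 'a) \<Rightarrow> 'a list set" where
  "Substr N r par lab =
     {take k (suf r par lab u) | u k. u \<in> N \<and> k \<le> depth r par u}"

text \<open>Explicit nodes of STree(T), identified with the strings they spell from the root:
  the root, the leaves suf(v) for non-root nodes v of T, and the branching nodes.\<close>
definition STnodes :: "'v set \<Rightarrow> 'v \<Rightarrow> ('v \<Rightarrow> 'v) \<Rightarrow> ('v \<Rightarrow> 'a) \<Rightarrow> 'a list set" where
  "STnodes N r par lab =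
     {[]} \<union> suf r par lab ` (N - {r}) \<union>
     {w. \<exists>a b. a \<noteq> b \<and> w @ [a] \<in> Substr N r par lab \<and> w @ [b] \<in> Substr N r par lab}"

definition STedge :: "'v set \<Rightarrow> 'v \<Rightarrow> ('v \<Rightarrow> 'v) \<Rightarrow> ('v \<Rightarrow> 'a) \<Rightarrow> 'a list \<Rightarrow> 'a list \<Rightarrow> bool" where
  "STedge N r par lab x y \<longleftrightarrow>
     x \<in> STnodes N r par lab \<and> y \<in> STnodes N r par lab \<and> strict_prefix x y \<and>
     (\<forall>z \<in> STnodes N r par lab. \<not> (strict_prefix x z \<and> strict_prefix z y))"

definition implicit_on_edge :: "'v set \<Rightarrow> 'v \<Rightarrow> ('v \<Rightarrow> 'v) \<Rightarrow> ('v \<Rightarrow> 'a) \<Rightarrow>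
    'a list \<Rightarrow> 'a list \<Rightarrow> 'a list \<Rightarrow> bool" where
  "implicit_on_edge N r par lab w x y \<longleftrightarrow>
     STedge N r par lab x y \<and> strict_prefix x w \<and> strict_prefix w y"

definition palindrome :: "'a list \<Rightarrow> bool" where
  "palindrome w \<longleftrightarrow> rev w = w"

end

theory Submission
  imports Defs
begin

lemma trie_reach: "trie N r par lab d \<Longrightarrow> v \<in> N \<Longrightarrow> (par ^^ depth r par v) v = r"
  unfolding depth_def trie_def by (metis (mono_tags, lifting) LeastI_ex)

lemma depth_min: "i < depth r par v \<Longrightarrow> (par ^^ i) v \<noteq> r"
  unfolding depth_def using not_less_Least by blast

lemma iter_in_N: "trie N r par lab d \<Longrightarrow> v \<in> N \<Longrightarrow> j \<le> depth r par v \<Longrightarrow> (par ^^ j) v \<in> N"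
proof (induction j)
  case 0 then show ?case by simp
next
  case (Suc j)
  then have "(par ^^ j) v \<in> N" by simp
  moreover have "(par ^^ j) v \<noteq> r" using depth_min Suc by (metis Suc_le_eq)
  ultimately show ?case using Suc(2) unfolding trie_def by auto
qed

lemma depth_iter: "trie N r par lab d \<Longrightarrow> v \<in> N \<Longrightarrow> j \<le> depth r par v \<Longrightarrow>
   depth r par ((par ^^ j) v) = depth r par v - j"
proof -
  assume T: "trie N r par lab d" and v: "v \<in> N" and j: "j \<le> depth r par v"
  have e: "(par ^^ k) ((par ^^ j) v) = (par ^^ (k + j)) v" for k by (simp add: funpow_add)
  show ?thesis unfolding depth_def[of r par "(par ^^ j) v"]
  proof (rule Least_equality)
    show "(par ^^ (depth r par v - j)) ((par ^^ j) v) = r" using e j trie_reach[OF T v] by simp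
  next
    fix k assume "(par ^^ k) ((par ^^ j) v) = r"
    then have "(par ^^ (k + j)) v = r" using e by simp
    then show "depth r par v - j \<le> k" using depth_min[of "k+j" r par v] by linarith
  qed
qed

lemma length_suf[simp]: "length (suf r par lab v) = depth r par v"
  by (simp add: suf_def)

lemma suf_nth: "i < depth r par v \<Longrightarrow> suf r par lab v ! i = lab ((par ^^ i) v)"
  by (simp add: suf_def)

lemma suf_iter: "trie N r par lab d \<Longrightarrow> v \<in> N \<Longrightarrow> j \<le> depth r par v \<Longrightarrow>
   drop j (suf r par lab v) = suf r par lab ((par ^^ j) v)"
  apply (rule nth_equalityI)
   apply (simp add: depth_iter)
  apply (simp add: depth_iter suf_nth)
  apply (metis add.commute comp_apply funpow_add)
  done

lemma Substr_take: "w \<in> Substr N r par lab \<Longrightarrow> take k w \<in> Substr N r par lab"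
  unfolding Substr_def by auto (metis min.coboundedI2 take_take)

lemma Substr_drop: assumes T: "trie N r par lab d" and w: "w \<in> Substr N r par lab"
  shows "drop j w \<in> Substr N r par lab"
proof -
  obtain u k where u: "u \<in> N" "k \<le> depth r par u" "w = take k (suf r par lab u)"
    using w unfolding Substr_def by auto
  show ?thesis
  proof (cases "j \<le> k")
    case True
    have "drop j w = take (k - j) (suf r par lab ((par ^^ j) u))"
      using u True by (simp add: drop_take suf_iter[OF T])
    moreover have "(par ^^ j) u \<in> N" using iter_in_N[OF T] u True by simp
    moreover have "k - j \<le> depth r par ((par ^^ j) u)" using depth_iter[OF T] u True by simp
    ultimately show ?thesis unfolding Substr_def by blast
  next
    case False
    then have "drop j w = take 0 (suf r par lab u)" using u by simp
    then show ?thesis using u unfolding Substr_def by blast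
  qed
qed

lemma Substr_d: assumes T: "trie N r par lab d" and w: "w \<in> Substr N r par lab"
  and i: "Suc i < length w" shows "w ! i \<noteq> d"
proof -
  obtain u k where u: "u \<in> N" "k \<le> depth r par u" "w = take k (suf r par lab u)"
    using w unfolding Substr_def by auto
  have ik: "Suc i < k" "Suc i < depth r par u" using i u by auto
  have wi: "w ! i = lab ((par ^^ i) u)" using u ik by (simp add: suf_nth)
  have "(par ^^ i) u \<in> N" using iter_in_N[OF T u(1)] ik by simp
  moreover have "(par ^^ i) u \<noteq> r" using depth_min ik by (metis Suc_lessD)
  moreover have "par ((par ^^ i) u) \<noteq> r" using depth_min[OF ik(2)] by simp
  ultimately show ?thesis using wi T unfolding trie_def by auto
qed

lemma leaf_last: assumes T: "trie N r par lab d" and u: "u \<in> N" "u \<noteq> r"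
  shows "suf r par lab u \<noteq> [] \<and> last (suf r par lab u) = d"
proof -
  have dp: "depth r par u > 0"
    using trie_reach[OF T u(1)] u(2) by (metis funpow_0 gr0I)
  define x where "x = (par ^^ (depth r par u - 1)) u"
  have "x \<in> N" using iter_in_N[OF T u(1)] x_def by simp
  moreover have "x \<noteq> r" using depth_min[of "depth r par u - 1" r par u] dp x_def by simp
  moreover have "par x = r" using trie_reach[OF T u(1)] dp x_def
    by (metis Suc_diff_1 comp_apply funpow.simps(2))
  ultimately have "lab x = d" using T unfolding trie_def by auto
  moreover have ne: "suf r par lab u \<noteq> []" using dp by (metis length_greater_0_conv length_suf)
  moreover have "last (suf r par lab u) = lab x"
    using dp ne by (simp add: last_conv_nth suf_nth x_def)
  ultimately show ?thesis using dp by (metis length_greater_0_conv length_suf)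
qed

lemma STnodes_Substr: assumes T: "trie N r par lab d"
  shows "STnodes N r par lab \<subseteq> Substr N r par lab"
proof
  fix w assume "w \<in> STnodes N r par lab"
  then consider "w = []" | u where "u \<in> N" "w = suf r par lab u"
    | a where "w @ [a] \<in> Substr N r par lab"
    unfolding STnodes_def by auto
  then show "w \<in> Substr N r par lab"
  proof cases
    case 1
    have "r \<in> N" using T unfolding trie_def by auto
    then show ?thesis using 1 unfolding Substr_def by force
  next
    case (2 u)
    then show ?thesis unfolding Substr_def
      by (smt (verit) length_suf mem_Collect_eq order_refl take_all)
  next
    case (3 a)
    then show ?thesis using Substr_take[of "w @ [a]" N r par lab "length w"] by simp
  qed
qed


lemma prefix_take: "prefix p w \<Longrightarrow> length p \<le> k \<Longrightarrow> prefix p (take k w)"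
  by (auto simp: prefix_def)

lemma prefix_eq_len: "prefix a b \<Longrightarrow> length b \<le> length a \<Longrightarrow> a = b"
  by (auto simp: prefix_def)

lemma prefix_eq_len2: "prefix a c \<Longrightarrow> prefix b c \<Longrightarrow> length a = length b \<Longrightarrow> a = b"
  by (metis prefix_length_prefix prefix_order.antisym order_refl)

theorem lemma3:
  fixes N :: "'v set" and r :: 'v and par :: "'v \<Rightarrow> 'v" and lab :: "'v \<Rightarrow> 'a"
    and d :: 'a and p q u v :: "'a list" and c :: 'a
  assumes "trie N r par lab d"
    and "p \<in> Substr N r par lab" and "q \<in> Substr N r par lab"
    and "palindrome p" and "palindrome q"
    and "strict_prefix p q"
    and "implicit_on_edge N r par lab p u v"
    and "c = v ! length p"
  shows "\<exists>x y. implicit_on_edge N r par lab q x y \<and> prefix v x \<and> y ! length q = c"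
proof -
  note T = assms(1)
  define S where "S = Substr N r par lab"
  define E where "E = STnodes N r par lab"
  have ES: "E \<subseteq> S" using STnodes_Substr[OF T] unfolding E_def S_def .
  have pS: "p \<in> S" and qS: "q \<in> S" using assms unfolding S_def by auto
  have edge: "u \<in> E" "v \<in> E" "strict_prefix u v"
     "\<And>z. z \<in> E \<Longrightarrow> \<not> (strict_prefix u z \<and> strict_prefix z v)"
    and up: "strict_prefix u p" and pv: "strict_prefix p v"
    using assms(7) unfolding implicit_on_edge_def STedge_def E_def by auto
  have vS: "v \<in> S" using edge ES by auto
  have pne: "p \<noteq> []" using up by auto
  have lpv: "length p < length v" using pv by (rule prefix_length_less)
  have lpq: "length p < length q" using assms(6) by (metis prefix_length_less)
  have branch: "\<And>w a b. a \<noteq> b \<Longrightarrow> w @ [a] \<in> S \<Longrightarrow> w @ [b] \<in> S \<Longrightarrow> w \<in> E"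
    unfolding E_def S_def STnodes_def by blast
  have leaf: "\<And>w. w \<in> E \<Longrightarrow> w = [] \<or> (w \<in> S \<and> w \<noteq> [] \<and> last w = d) \<or> (\<exists>a b. a \<noteq> b \<and> w @ [a] \<in> S \<and> w @ [b] \<in> S)"
    unfolding E_def S_def STnodes_def using leaf_last[OF T] STnodes_Substr[OF T] unfolding STnodes_def by blast
  have UE: "prefix w v" if wS: "w \<in> S" and pw: "prefix p w" and wl: "length w \<le> length v" for w
  proof -
    have "\<forall>k. length p \<le> k \<longrightarrow> k \<le> length w \<longrightarrow> take k w = take k v"
    proof
      fix k show "length p \<le> k \<longrightarrow> k \<le> length w \<longrightarrow> take k w = take k v"
      proof (induction k)
        case 0 then show ?case by simp
      next
        case (Suc k)
        show ?case
        proof (intro impI)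
          assume a1: "length p \<le> Suc k" and a2: "Suc k \<le> length w"
          show "take (Suc k) w = take (Suc k) v"
          proof (cases "length p = Suc k")
            case True
            then show ?thesis using pw pv
              by (metis prefix_def strict_prefix_def append_eq_conv_conj)
          next
            case False
            then have kk: "length p \<le> k" using a1 by simp
            define z where "z = take k w"
            have zv: "z = take k v" using Suc.IH kk a2 z_def by simp
            have pz: "prefix p z" using pw kk unfolding z_def by (rule prefix_take)
            have kv: "k < length v" using a2 wl by simp
            have zsv: "strict_prefix z v" unfolding zv using kv
              by (auto simp: strict_prefix_def take_is_prefix)
            have uz: "strict_prefix u z" using up pz by (meson prefix_order.less_le_trans)
            have zE: "z \<notin> E" using edge(4) uz zsv by blast
            have w1: "take (Suc k) w = z @ [w ! k]" using a2 z_def by (simp add: take_Suc_conv_app_nth)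
            have v1: "take (Suc k) v = z @ [v ! k]" using kv zv by (simp add: take_Suc_conv_app_nth)
            have "take (Suc k) w \<in> S" "take (Suc k) v \<in> S"
              using wS vS unfolding S_def by (simp_all add: Substr_take)
            then have "w ! k = v ! k" using branch zE w1 v1 by metis
            then show ?thesis using w1 v1 by simp
          qed
        qed
      qed
    qed
    then have "take (length w) w = take (length w) v" using pw prefix_length_le by blast
    then show ?thesis by (metis take_all order_refl take_is_prefix)
  qed
  define m where "m = length q - length p"
  have mpos: "m > 0" using lpq m_def by simp
  have qp: "drop m q = p"
  proof -
    have "prefix (rev p) (rev q)" using assms(4,5) assms(6) unfolding palindrome_def
      by (simp add: strict_prefix_def)
    then have "suffix p q" by (simp add: suffix_to_prefix[symmetric])
    then show ?thesis unfolding m_def suffix_def by auto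
  qed
  have ext: "w ! length q = c" if wS: "w \<in> S" and qw: "strict_prefix q w" for w
  proof -
    obtain t where t: "w = q @ t" "t \<noteq> []" using qw by (metis prefix_def strict_prefix_def append_Nil2)
    have dw: "drop m w = p @ t" using t qp m_def by simp
    define w' where "w' = take (length p + 1) (drop m w)"
    have w'eq: "w' = p @ [hd t]" unfolding w'_def dw using t(2) by (cases t) auto
    have "w' \<in> S" unfolding w'_def using wS unfolding S_def by (intro Substr_take Substr_drop[OF T])
    moreover have "prefix p w'" using w'eq by simp
    moreover have "length w' \<le> length v" using w'eq lpv by simp
    ultimately have "prefix w' v" using UE by blast
    then have "v ! length p = hd t" using w'eq by (auto simp: prefix_def nth_append)
    moreover have "w ! length q = hd t" using t by (simp add: hd_conv_nth nth_append)
    ultimately show ?thesis using assms(8) by simp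
  qed
  have qnE: "q \<notin> E"
  proof
    assume qE: "q \<in> E"
    have qne: "q \<noteq> []" using lpq by auto
    consider "q \<in> S \<and> q \<noteq> [] \<and> last q = d" | "\<exists>a b. a \<noteq> b \<and> q @ [a] \<in> S \<and> q @ [b] \<in> S"
      using leaf[OF qE] qne by blast
    then show False
    proof cases
      case 1
      have "q ! 0 = last q" using assms(5) qne unfolding palindrome_def
        by (metis hd_conv_nth hd_rev)
      moreover have "Suc 0 < length q" using lpq pne by (cases p) auto
      ultimately show False using Substr_d[OF T, of q 0] qS 1 unfolding S_def by auto
    next
      case 2
      then obtain a b where ab: "a \<noteq> b" "q @ [a] \<in> S" "q @ [b] \<in> S" by blast
      have "a = c" using ext[OF ab(2)] by (simp add: strict_prefix_def)
      moreover have "b = c" using ext[OF ab(3)] by (simp add: strict_prefix_def)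
      ultimately show False using ab by simp
    qed
  qed
  have vq: "strict_prefix v q"
  proof (cases "length v \<le> length q")
    case True
    have "take (length v) q \<in> S" using qS unfolding S_def by (rule Substr_take)
    moreover have "prefix p (take (length v) q)" using assms(6) lpv
      by (intro prefix_take) (auto simp: strict_prefix_def)
    moreover have "length (take (length v) q) \<le> length v" by simp
    ultimately have "prefix (take (length v) q) v" using UE by blast
    then have "take (length v) q = v" using True by (intro prefix_eq_len) auto
    then have "prefix v q" by (metis take_is_prefix)
    moreover have "v \<noteq> q" using qnE edge(2) by auto
    ultimately show ?thesis by (simp add: strict_prefix_def)
  next
    case False
    then have qv: "prefix q v" using UE qS assms(6) by (simp add: strict_prefix_def)
    have vne: "v \<noteq> []" using pv by auto
    have dv: "prefix p (drop m v)"
    proof -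
      obtain t where "v = q @ t" using qv prefix_def by blast
      then show ?thesis using qp m_def by simp
    qed
    consider "v \<in> S \<and> v \<noteq> [] \<and> last v = d" | "\<exists>a b. a \<noteq> b \<and> v @ [a] \<in> S \<and> v @ [b] \<in> S"
      using leaf[OF edge(2)] vne by blast
    then have False
    proof cases
      case 1
      define w where "w = drop m v"
      have "w \<in> S" using vS unfolding S_def w_def by (rule Substr_drop[OF T])
      then have wv: "prefix w v" using UE dv unfolding w_def by simp
      have lv: "length v > m" using False m_def by simp
      have "w ! (length v - m - 1) = last v" using lv unfolding w_def by (simp add: last_conv_nth vne)
      moreover have "w ! (length v - m - 1) = v ! (length v - m - 1)"
      proof -
        obtain zs where vz: "v = w @ zs" using wv prefix_def by blast
        have lw: "length w = length v - m" unfolding w_def by simp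
        have "(w @ zs) ! (length v - m - 1) = w ! (length v - m - 1)"
        proof -
          have "length v - m - 1 < length w" using lw lv by linarith
          then show ?thesis by (simp only: nth_append) simp
        qed
        then show ?thesis using vz by simp
      qed
      ultimately have "v ! (length v - m - 1) = d" using 1 by simp
      moreover have "Suc (length v - m - 1) < length v" using lv mpos by simp
      ultimately show False using Substr_d[OF T] vS unfolding S_def by blast
    next
      case 2
      then obtain a b where ab: "a \<noteq> b" "v @ [a] \<in> S" "v @ [b] \<in> S" by blast
      have lv: "length v > m" using False m_def by simp
      have wa: "prefix (drop m (v @ [a])) v"
      proof (rule UE)
        show "drop m (v @ [a]) \<in> S" using ab(2) unfolding S_def by (rule Substr_drop[OF T])
        show "prefix p (drop m (v @ [a]))" using dv lv by (auto simp: prefix_def)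
        show "length (drop m (v @ [a])) \<le> length v" using mpos by simp
      qed  
      have wb: "prefix (drop m (v @ [b])) v"
      proof (rule UE)
        show "drop m (v @ [b]) \<in> S" using ab(3) unfolding S_def by (rule Substr_drop[OF T])
        show "prefix p (drop m (v @ [b]))" using dv lv by (auto simp: prefix_def)
        show "length (drop m (v @ [b])) \<le> length v" using mpos by simp
      qed
      have "drop m (v @ [a]) = drop m (v @ [b])" using wa wb by (intro prefix_eq_len2) auto
      then show False using ab lv by simp
    qed
    then show ?thesis by simp
  qed
  define X where "X = {x. x \<in> E \<and> strict_prefix x q}"
  define Y where "Y = {y. y \<in> E \<and> strict_prefix q y}"
  have "[] \<in> X" using lpq unfolding X_def E_def STnodes_def by (auto simp: strict_prefix_def)
  then obtain x where xX: "x \<in> X" and xmax: "\<And>z. z \<in> X \<Longrightarrow> length z \<le> length x"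
  proof -
    have "\<forall>y. y \<in> X \<longrightarrow> length y < Suc (length q)"
      unfolding X_def by (auto dest: prefix_length_le simp: strict_prefix_def le_imp_less_Suc)
    then show ?thesis using Lattices_Big.ex_has_greatest_nat[of "\<lambda>z. z \<in> X" "[]" length "Suc (length q)"]
      \<open>[] \<in> X\<close> that by blast
  qed
  obtain uu k where uu: "uu \<in> N" "k \<le> depth r par uu" "q = take k (suf r par lab uu)"
    using assms(3) unfolding Substr_def by auto
  have "uu \<noteq> r"
  proof
    assume "uu = r"
    then have "depth r par uu = 0" unfolding depth_def by simp
    then show False using uu lpq by simp
  qed
  then have leafE: "suf r par lab uu \<in> E" using uu unfolding E_def STnodes_def by auto
  have "strict_prefix q (suf r par lab uu)" using uu leafE qnE
    by (metis take_is_prefix strict_prefix_def)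
  then have "suf r par lab uu \<in> Y" using leafE Y_def by auto
  then obtain y where yY: "y \<in> Y" and ymin: "\<And>z. z \<in> Y \<Longrightarrow> length y \<le> length z"
    using ex_has_least_nat[of "\<lambda>z. z \<in> Y" _ length] by blast
  have xE: "x \<in> E" and xq: "strict_prefix x q" using xX X_def by auto
  have yE: "y \<in> E" and qy: "strict_prefix q y" using yY Y_def by auto
  have "STedge N r par lab x y"
    unfolding STedge_def
  proof (intro conjI ballI)
    show "x \<in> STnodes N r par lab" "y \<in> STnodes N r par lab" using xE yE E_def by auto
    show "strict_prefix x y" using xq qy by (meson prefix_order.less_trans)
  next
    fix z assume zE: "z \<in> STnodes N r par lab"
    show "\<not> (strict_prefix x z \<and> strict_prefix z y)"
    proof
      assume a: "strict_prefix x z \<and> strict_prefix z y"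
      have "prefix z q \<or> prefix q z" using a qy prefix_same_cases by (metis strict_prefix_def)
      moreover have "z \<noteq> q" using qnE zE E_def by auto
      ultimately consider "strict_prefix z q" | "strict_prefix q z" by (auto simp: strict_prefix_def)
      then show False
      proof cases
        case 1
        then have "z \<in> X" using zE X_def E_def by auto
        then show False using xmax a by (metis prefix_length_less leD)
      next
        case 2
        then have "z \<in> Y" using zE Y_def E_def by auto
        then show False using ymin a by (metis prefix_length_less leD)
      qed
    qed
  qed
  then have ie: "implicit_on_edge N r par lab q x y" using xq qy unfolding implicit_on_edge_def by simp
  have "v \<in> X" using edge(2) vq X_def by auto
  then have "prefix v x" using xmax xq vq prefix_length_prefix by (metis strict_prefix_def)
  moreover have "y ! length q = c" using ext qy yE ES by auto
  ultimately show ?thesis using ie by blast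
qed

end
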